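(* Let $\gamma:[0,1]\to\mathbb{R}^2$ be a $C^1$ curve of constant speed $c>0$ with $\gamma(0)\neq\gamma(1)$, whose turning angle function $\theta$ satisfies $\theta(1)-\theta(0)=2\pi m$ with $0\neq m\in\mathbb{Z}$. Let $\sigma$ be a permutation of $\{1,2,3\}$. Then $\gamma$ is $(3,1)$-rearrangeable with respect to $\sigma$ if and only if $\sigma$ is a transposition.
   Context: A turning angle function is a continuous $\theta$ with $\gamma'(s)=c(\cos\theta(s),\sin\theta(s))$. Concatenation $\alpha*\beta$ of two $C^1$ planar curves of the same constant speed ($\alpha$ on $[a_1,b_1]$, $\beta$ on $[a_2,b_2]$) is the curve equal to $\alpha(s+a_1)$ for $s\le b_1-a_1$ and to $T(\beta(s-(b_1-a_1)+a_2))$ afterwards, where $T$ is the orientation-preserving rigid motion sending $\beta(a_2)$ to $\alpha(b_1)$ and the unit tangent of $\beta$ at $a_2$ to that of $\alpha$ at $b_1$; it is associative. For cuts $0\le c_1\le c_2\le 1$ let $\gamma_1,\gamma_2,\gamma_3$ be the restrictions of $\gamma$ to $[0,c_1],[c_1,c_2],[c_2,1]$ (degenerate arcs are points carrying the tangent direction of $\gamma$), and for $\sigma\in S_3$ let $r_{\sigma,C}:=\gamma_{\sigma(1)}*\gamma_{\sigma(2)}*\gamma_{\sigma(3)}$ over $[0,1]$. $\gamma$ is $(3,1)$-rearrangeable with respect to $\sigma$ if there exist such cuts $C=(c_1,c_2)$ with $r_{\sigma,C}$ a closed $C^1$ curve (end point equals start point and the tangents there agree). *)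

theory Defs
  imports "HOL-Analysis.Analysis" "HOL-Combinatorics.Transposition" "HOL-Combinatorics.Permutations"
begin

text \<open>Planar curves are modelled as maps into the complex plane (= R^2).
An arc is a tuple (f, f', a, b): the curve f on the parameter interval [a,b]
together with its tangent (velocity) field f'.  A degenerate arc (a = b) is a
point carrying a tangent direction.\<close>

type_synonym arc = "(real \<Rightarrow> complex) \<times> (real \<Rightarrow> complex) \<times> real \<times> real"

text \<open>The orientation-preserving rigid motion T is
z \<mapsto> alpha(b1) + u (z - beta(a2)) where the unit complex number u rotates the
unit tangent of beta at a2 onto the unit tangent of alpha at b1.\<close>

definition concat_arc :: "arc \<Rightarrow> arc \<Rightarrow> arc" where
  "concat_arc A B =
    (case A of (f, f', a1, b1) \<Rightarrow> case B of (g, g', a2, b2) \<Rightarrow>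
      (let u = sgn (f' b1) / sgn (g' a2);
           T = (\<lambda>z. f b1 + u * (z - g a2))
       in ((\<lambda>s. if s \<le> b1 - a1 then f (s + a1) else T (g (s - (b1 - a1) + a2))),
           (\<lambda>s. if s \<le> b1 - a1 then f' (s + a1) else u * g' (s - (b1 - a1) + a2)),
           0, (b1 - a1) + (b2 - a2))))"

definition tangent01 :: "(real \<Rightarrow> complex) \<Rightarrow> real \<Rightarrow> complex" where
  "tangent01 \<gamma> s = vector_derivative \<gamma> (at s within {0..1})"

definition piece :: "(real \<Rightarrow> complex) \<Rightarrow> real \<Rightarrow> real \<Rightarrow> nat \<Rightarrow> arc" where
  "piece \<gamma> c1 c2 i =
     (if i = 1 then (\<gamma>, tangent01 \<gamma>, 0, c1)
      else if i = 2 then (\<gamma>, tangent01 \<gamma>, c1, c2)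
      else (\<gamma>, tangent01 \<gamma>, c2, 1))"

definition rearr :: "(real \<Rightarrow> complex) \<Rightarrow> (nat \<Rightarrow> nat) \<Rightarrow> real \<Rightarrow> real \<Rightarrow> arc" where
  "rearr \<gamma> \<sigma> c1 c2 =
     concat_arc (concat_arc (piece \<gamma> c1 c2 (\<sigma> 1)) (piece \<gamma> c1 c2 (\<sigma> 2)))
                (piece \<gamma> c1 c2 (\<sigma> 3))"

definition closed_C1_arc :: "arc \<Rightarrow> bool" where
  "closed_C1_arc A = (case A of (h, h', a, b) \<Rightarrow> h 0 = h 1 \<and> sgn (h' 0) = sgn (h' 1))"

definition rearrangeable_3_1 :: "(real \<Rightarrow> complex) \<Rightarrow> (nat \<Rightarrow> nat) \<Rightarrow> bool" where
  "rearrangeable_3_1 \<gamma> \<sigma> =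
     (\<exists>c1 c2. 0 \<le> c1 \<and> c1 \<le> c2 \<and> c2 \<le> 1 \<and> closed_C1_arc (rearr \<gamma> \<sigma> c1 c2))"

definition is_transposition3 :: "(nat \<Rightarrow> nat) \<Rightarrow> bool" where
  "is_transposition3 \<sigma> =
     (\<exists>a b. a \<in> {1,2,3} \<and> b \<in> {1,2,3} \<and> a \<noteq> b \<and> \<sigma> = Transposition.transpose a b)"

end

theory Submission
  imports Defs
begin



lemma concat_arc_simp:
  "concat_arc (f,f',a1,b1) (g,g',a2,b2) =
    (let u = sgn (f' b1) / sgn (g' a2)
     in ((\<lambda>s. if s \<le> b1 - a1 then f (s + a1) else f b1 + u * (g (s - (b1 - a1) + a2) - g a2)),
           (\<lambda>s. if s \<le> b1 - a1 then f' (s + a1) else u * g' (s - (b1 - a1) + a2)),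
           0, (b1 - a1) + (b2 - a2)))"
  by (simp add: concat_arc_def Let_def)

lemma sgn_unit_mult: "norm (u::complex) = 1 \<Longrightarrow> sgn (u * z) = u * sgn z"
  by (simp add: sgn_div_norm norm_mult)

lemma closed_formula:
  fixes f f' :: "real \<Rightarrow> complex"
  assumes o: "a1 \<le> b1" "a2 \<le> b2" "a3 \<le> b3" "(b1-a1)+(b2-a2)+(b3-a3) = 1"
   and nz: "f' b1 \<noteq> 0" "f' a2 \<noteq> 0" "f' b2 \<noteq> 0" "f' a3 \<noteq> 0"
  shows "closed_C1_arc (concat_arc (concat_arc (f,f',a1,b1) (f,f',a2,b2)) (f,f',a3,b3)) \<longleftrightarrow>
     (f a1 = f b1 + (sgn (f' b1) / sgn (f' a2)) * (f b2 - f a2)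
         + (sgn (f' b1) / sgn (f' a2) * sgn (f' b2) / sgn (f' a3)) * (f b3 - f a3)
      \<and> sgn (f' a1) = (sgn (f' b1) / sgn (f' a2) * sgn (f' b2) / sgn (f' a3)) * sgn (f' b3))"
proof -
  define u1 where "u1 = sgn (f' b1) / sgn (f' a2)"
  define L1 where "L1 = b1 - a1"
  define L12 where "L12 = L1 + (b2 - a2)"
  define F where "F = (\<lambda>s. if s \<le> L1 then f (s + a1) else f b1 + u1 * (f (s - L1 + a2) - f a2))"
  define F' where "F' = (\<lambda>s. if s \<le> L1 then f' (s + a1) else u1 * f' (s - L1 + a2))"
  have inner: "concat_arc (f,f',a1,b1) (f,f',a2,b2) = (F, F', 0, L12)"
    unfolding F_def F'_def u1_def L1_def L12_def by (simp add: concat_arc_simp Let_def)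
  have u1n: "norm u1 = 1" using nz by (simp add: u1_def norm_divide norm_sgn)
  have FL: "F L12 = f b1 + u1 * (f b2 - f a2)"
    using o by (auto simp: F_def L12_def L1_def)
  have sFL: "sgn (F' L12) = u1 * sgn (f' b2)"
  proof (cases "a2 = b2")
    case True
    then show ?thesis using o nz by (simp add: F'_def L12_def L1_def u1_def sgn_zero_iff)
  next
    case False
    then show ?thesis using o nz u1n by (simp add: F'_def L12_def L1_def sgn_unit_mult)
  qed
  define u2 where "u2 = sgn (F' L12) / sgn (f' a3)"
  have outer: "concat_arc (F, F', 0, L12) (f,f',a3,b3) =
     ((\<lambda>s. if s \<le> L12 then F s else F L12 + u2 * (f (s - L12 + a3) - f a3)),
      (\<lambda>s. if s \<le> L12 then F' s else u2 * f' (s - L12 + a3)), 0, L12 + (b3 - a3))"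
    unfolding concat_arc_simp Let_def u2_def by (simp cong: if_cong)
  have u2e: "u2 = u1 * sgn (f' b2) / sgn (f' a3)" using sFL by (simp add: u2_def)
  have u2n: "norm u2 = 1" using nz u1n by (simp add: u2e norm_divide norm_sgn norm_mult)
  have h0: "F 0 = f a1" "F' 0 = f' a1" using o by (auto simp: F_def F'_def L1_def)
  define H where "H = (\<lambda>s. if s \<le> L12 then F s else F L12 + u2 * (f (s - L12 + a3) - f a3))"
  define H' where "H' = (\<lambda>s. if s \<le> L12 then F' s else u2 * f' (s - L12 + a3))"
  have eq: "closed_C1_arc (concat_arc (concat_arc (f,f',a1,b1) (f,f',a2,b2)) (f,f',a3,b3)) \<longleftrightarrow>
      H 0 = H 1 \<and> sgn (H' 0) = sgn (H' 1)"
    unfolding inner outer closed_C1_arc_def H_def[symmetric] H'_def[symmetric] by simp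
  have L0: "0 \<le> L12" using o by (simp add: L12_def L1_def)
  have H0: "H 0 = f a1" "H' 0 = f' a1" using h0 L0 by (auto simp: H_def H'_def)
  have H1: "H 1 = f b1 + u1 * (f b2 - f a2) + u2 * (f b3 - f a3) \<and> sgn (H' 1) = u2 * sgn (f' b3)"
  proof (cases "1 \<le> L12")
    case True
    then have e: "L12 = 1" "b3 = a3" using o by (auto simp: L12_def L1_def)
    have "sgn (F' 1) = u2 * sgn (f' b3)" using sFL e nz by (simp add: u2e sgn_zero_iff)
    then show ?thesis using e FL by (simp add: H_def H'_def)
  next
    case False
    then have e: "1 - L12 + a3 = b3" using o by (auto simp: L12_def L1_def)
    show ?thesis using e FL False u2n
      by (simp add: H_def H'_def sgn_unit_mult)
  qed
  show ?thesis unfolding eq H0 using H1 by (simp add: u1_def u2e)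
qed


lemma exp_diff_const:
  fixes f g :: "'a::topological_space \<Rightarrow> complex"
  assumes S: "connected S" and cf: "continuous_on S f" and cg: "continuous_on S g"
    and ex: "\<And>x. x \<in> S \<Longrightarrow> exp (f x) = exp (g x)" and ab: "a \<in> S" "b \<in> S"
  shows "f a - g a = f b - g b"
proof -
  define h where "h = (\<lambda>x. f x - g x)"
  have ch: "continuous_on S h" unfolding h_def using cf cg by (intro continuous_intros)
  have hk: "\<exists>n::int. h x = of_int (2 * n) * pi * \<i>" if "x \<in> S" for x
  proof -
    have "exp (h x) = exp 0" using ex[OF that] by (simp add: h_def exp_diff)
    then have "\<exists>n::int. h x = 0 + of_int (2 * n) * pi * \<i>" using exp_eq[of "h x" 0] by blast
    then show ?thesis by simp
  qed
  have "h constant_on S"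
  proof (rule continuous_discrete_range_constant[OF S ch])
    fix x assume x: "x \<in> S"
    show "\<exists>e>0. \<forall>y. y \<in> S \<and> h y \<noteq> h x \<longrightarrow> e \<le> norm (h y - h x)"
    proof (intro exI[of _ pi] conjI allI impI)
      show "pi > 0" by (rule pi_gt_zero)
      fix y assume y: "y \<in> S \<and> h y \<noteq> h x"
      obtain n where n: "h x = of_int (2 * n) * pi * \<i>" using hk x by blast
      obtain n' where n': "h y = of_int (2 * n') * pi * \<i>" using hk y by blast
      have "n' \<noteq> n" using y n n' by auto
      then have "1 \<le> \<bar>real_of_int (2*n' - 2*n)\<bar>" by linarith
      define k where "k = 2*n' - 2*n"
      have "h y - h x = of_int k * pi * \<i>" using n n' by (simp add: algebra_simps k_def)
      then have "norm (h y - h x) = \<bar>real_of_int (2*n' - 2*n)\<bar> * pi"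
        by (simp add: norm_mult k_def[symmetric])
      moreover have "1 * pi \<le> \<bar>real_of_int (2*n' - 2*n)\<bar> * pi"
        using \<open>1 \<le> _\<close> pi_gt_zero by (intro mult_right_mono) auto
      ultimately show "pi \<le> norm (h y - h x)" by simp
    qed
  qed
  then show ?thesis using ab unfolding constant_on_def h_def by metis
qed

lemma triangle_core:
  fixes F :: "real \<times> real \<Rightarrow> complex" and \<phi>1 \<phi>2 \<phi>3 :: "real \<Rightarrow> real"
  assumes contF: "continuous_on {p. 0 \<le> fst p \<and> fst p \<le> snd p \<and> snd p \<le> 1} F"
    and nz: "\<And>p. p \<in> {p. 0 \<le> fst p \<and> fst p \<le> snd p \<and> snd p \<le> 1} \<Longrightarrow> F p \<noteq> 0"
    and D: "D \<noteq> 0"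
    and c1: "continuous_on {0..1} \<phi>1" and c2: "continuous_on {0..1} \<phi>2"
    and c3: "continuous_on {0..1} \<phi>3"
    and e1: "\<And>t. t \<in> {0..1} \<Longrightarrow> F (0, t) = cis (\<phi>1 t) * D"
    and e2: "\<And>t. t \<in> {0..1} \<Longrightarrow> F (t, 1) = cis (\<phi>2 t) * D"
    and e3: "\<And>t. t \<in> {0..1} \<Longrightarrow> F (t, t) = cis (\<phi>3 t) * D"
  shows "(\<phi>1 1 - \<phi>1 0) + (\<phi>2 1 - \<phi>2 0) = \<phi>3 1 - \<phi>3 0"
proof -
  define T where "T = {p::real\<times>real. 0 \<le> fst p \<and> fst p \<le> snd p \<and> snd p \<le> 1}"
  have cvx: "u *\<^sub>R x + v *\<^sub>R y \<in> T" if "x \<in> T" "y \<in> T" "0 \<le> u" "0 \<le> v" "u + v = 1" for x y u v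
  proof -
    obtain a b where x: "x = (a, b)" by fastforce
    obtain c d where y: "y = (c, d)" by fastforce
    have *: "0 \<le> a" "a \<le> b" "b \<le> 1" "0 \<le> c" "c \<le> d" "d \<le> 1"
      using that(1,2) by (auto simp: T_def x y)
    have "u * a \<le> u * b" "v * c \<le> v * d" using * that by (simp_all add: mult_left_mono)
    moreover have "u * b \<le> u" using mult_left_mono[of b 1 u] * that by simp
    moreover have "v * d \<le> v" using mult_left_mono[of d 1 v] * that by simp
    moreover have "0 \<le> u * a" "0 \<le> v * c" using * that by simp_all
    ultimately show ?thesis using that by (auto simp: T_def x y)
  qed
  have "convex T" unfolding convex_def using cvx by blast
  then have "contractible T" by (rule convex_imp_contractible)
  then obtain L where cL: "continuous_on T L" and L: "\<And>x. x \<in> T \<Longrightarrow> F x = exp (L x)"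
    using continuous_logarithm_on_contractible[of T F] contF nz unfolding T_def by blast
  have edge: "L (p 1) - L (p 0) = \<i> * complex_of_real (\<phi> 1 - \<phi> 0)"
    if cp: "continuous_on {0..1} p" and pT: "p ` {0..1} \<subseteq> T" and c\<phi>: "continuous_on {0..1} \<phi>"
      and e: "\<And>t. t \<in> {0..1} \<Longrightarrow> F (p t) = cis (\<phi> t) * D" for p :: "real \<Rightarrow> real \<times> real" and \<phi> :: "real \<Rightarrow> real"
  proof -
    have "(L \<circ> p) 0 - (\<lambda>t. \<i> * complex_of_real (\<phi> t) + Ln D) 0
        = (L \<circ> p) 1 - (\<lambda>t. \<i> * complex_of_real (\<phi> t) + Ln D) 1"
    proof (rule exp_diff_const[of "{0..1}"])
      show "continuous_on {0..1} (L \<circ> p)" using cp pT cL by (meson continuous_on_compose continuous_on_subset)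
      show "continuous_on {0..1} (\<lambda>t. \<i> * complex_of_real (\<phi> t) + Ln D)"
        using c\<phi> by (intro continuous_intros)
      fix x :: real assume x: "x \<in> {0..1}"
      have "p x \<in> T" using pT x by auto
      then have "exp ((L \<circ> p) x) = F (p x)" using L by simp
      also have "\<dots> = cis (\<phi> x) * D" using e x by simp
      also have "\<dots> = exp (\<i> * complex_of_real (\<phi> x) + Ln D)"
        using D by (simp add: exp_add cis_conv_exp)
      finally show "exp ((L \<circ> p) x) = exp (\<i> * complex_of_real (\<phi> x) + Ln D)" .
    qed auto
    then show ?thesis by (simp add: algebra_simps)
  qed
  have E1: "L (0,1) - L (0,0) = \<i> * complex_of_real (\<phi>1 1 - \<phi>1 0)"
  proof (rule edge[of "\<lambda>t. (0,t)" \<phi>1])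
    show "continuous_on {0..1} (\<lambda>t. (0,t))" by (intro continuous_intros)
    show "(\<lambda>t. (0,t)) ` {0..1} \<subseteq> T" by (auto simp: T_def)
  qed (use c1 e1 in auto)
  have E2: "L (1,1) - L (0,1) = \<i> * complex_of_real (\<phi>2 1 - \<phi>2 0)"
  proof (rule edge[of "\<lambda>t. (t,1)" \<phi>2])
    show "continuous_on {0..1} (\<lambda>t. (t,1))" by (intro continuous_intros)
    show "(\<lambda>t. (t,1)) ` {0..1} \<subseteq> T" by (auto simp: T_def)
  qed (use c2 e2 in auto)
  have E3: "L (1,1) - L (0,0) = \<i> * complex_of_real (\<phi>3 1 - \<phi>3 0)"
  proof (rule edge[of "\<lambda>t. (t,t)" \<phi>3])
    show "continuous_on {0..1} (\<lambda>t. (t,t))" by (intro continuous_intros)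
    show "(\<lambda>t. (t,t)) ` {0..1} \<subseteq> T" by (auto simp: T_def)
  qed (use c3 e3 in auto)
  have "\<i> * complex_of_real ((\<phi>1 1 - \<phi>1 0) + (\<phi>2 1 - \<phi>2 0)) = \<i> * complex_of_real (\<phi>3 1 - \<phi>3 0)"
  proof -
    have "\<i> * complex_of_real (\<phi>3 1 - \<phi>3 0) = (L (0,1) - L (0,0)) + (L (1,1) - L (0,1))"
      using E3 by simp
    also have "\<dots> = \<i> * complex_of_real (\<phi>1 1 - \<phi>1 0) + \<i> * complex_of_real (\<phi>2 1 - \<phi>2 0)"
      using E1 E2 by simp
    also have "\<dots> = \<i> * complex_of_real ((\<phi>1 1 - \<phi>1 0) + (\<phi>2 1 - \<phi>2 0))"
      by (simp add: distrib_left)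
    finally show ?thesis by simp
  qed
  then show ?thesis by (metis mult_cancel_left complex_i_not_zero of_real_eq_iff)
qed

abbreviation Tri :: "(real \<times> real) set" where
  "Tri \<equiv> {p. 0 \<le> fst p \<and> fst p \<le> snd p \<and> snd p \<le> 1}"

context
  fixes \<gamma> :: "real \<Rightarrow> complex" and \<gamma>' :: "real \<Rightarrow> complex"
    and \<theta> :: "real \<Rightarrow> real" and c :: real and m :: int
  assumes deriv: "\<And>s. s \<in> {0..1} \<Longrightarrow> (\<gamma> has_vector_derivative \<gamma>' s) (at s within {0..1})"
    and c_pos: "c > 0"
    and ends: "\<gamma> 0 \<noteq> \<gamma> 1"
    and theta_cont: "continuous_on {0..1} \<theta>"
    and theta: "\<And>s. s \<in> {0..1} \<Longrightarrow> \<gamma>' s = complex_of_real c * cis (\<theta> s)"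
    and turning: "\<theta> 1 - \<theta> 0 = 2 * pi * real_of_int m"
begin

lemma tv: "x \<in> {0..1} \<Longrightarrow> tangent01 \<gamma> x = \<gamma>' x"
  unfolding tangent01_def using deriv[of x]
  by (intro vector_derivative_within_closed_interval) auto

lemma sgT: "x \<in> {0..1} \<Longrightarrow> sgn (tangent01 \<gamma> x) = cis (\<theta> x)"
proof -
  assume x: "x \<in> {0..1}"
  have "norm (complex_of_real c * cis (\<theta> x)) = c" using c_pos by (simp add: norm_mult)
  then show ?thesis using tv[OF x] theta[OF x] c_pos
    by (simp add: sgn_div_norm scaleR_conv_of_real field_simps)
qed

lemma nzT: "x \<in> {0..1} \<Longrightarrow> tangent01 \<gamma> x \<noteq> 0"
  using sgT[of x] by auto

lemma cis1: "cis (\<theta> 1) = cis (\<theta> 0)"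
proof -
  have "\<theta> 1 = \<theta> 0 + 2 * pi * real_of_int m" using turning by simp
  then have "cis (\<theta> 1) = cis (\<theta> 0) * cis (2 * pi * real_of_int m)" by (simp only: cis_mult)
  also have "cis (2 * pi * real_of_int m) = 1" by (rule cis_multiple_2pi) simp
  finally show ?thesis by simp
qed

lemma gcont: "continuous_on {0..1} \<gamma>"
  using deriv has_vector_derivative_continuous continuous_on_eq_continuous_within by blast

lemma contT: "continuous_on Tri (\<lambda>p. \<gamma> (fst p))" "continuous_on Tri (\<lambda>p. \<gamma> (snd p))"
   "continuous_on Tri (\<lambda>p. \<theta> (fst p))" "continuous_on Tri (\<lambda>p. \<theta> (snd p))"
  by (rule continuous_on_compose2[OF gcont continuous_on_fst] continuous_on_compose2[OF gcont continuous_on_snd]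
       continuous_on_compose2[OF theta_cont continuous_on_fst] continuous_on_compose2[OF theta_cont continuous_on_snd];
      auto)+

lemma case_123:
  assumes "0 \<le> c1" "c1 \<le> c2" "c2 \<le> 1"
  shows "\<not> closed_C1_arc (concat_arc (concat_arc (piece \<gamma> c1 c2 1) (piece \<gamma> c1 c2 2)) (piece \<gamma> c1 c2 3))"
proof
  assume h: "closed_C1_arc (concat_arc (concat_arc (piece \<gamma> c1 c2 1) (piece \<gamma> c1 c2 2)) (piece \<gamma> c1 c2 3))"
  have pts: "0 \<in> {0..1::real}" "1 \<in> {0..1::real}" "c1 \<in> {0..1}" "c2 \<in> {0..1}" using assms by auto
  have "closed_C1_arc (concat_arc (concat_arc (\<gamma>, tangent01 \<gamma>, 0, c1) (\<gamma>, tangent01 \<gamma>, c1, c2)) (\<gamma>, tangent01 \<gamma>, c2, 1))"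
    using h by (simp add: piece_def)
  then have "\<gamma> 0 = \<gamma> c1 + (sgn (tangent01 \<gamma> c1) / sgn (tangent01 \<gamma> c1)) * (\<gamma> c2 - \<gamma> c1)
         + (sgn (tangent01 \<gamma> c1) / sgn (tangent01 \<gamma> c1) * sgn (tangent01 \<gamma> c2) / sgn (tangent01 \<gamma> c2)) * (\<gamma> 1 - \<gamma> c2)"
    by (subst (asm) closed_formula) (use assms nzT pts in auto)
  then show False using ends
    unfolding sgT[OF pts(1)] sgT[OF pts(2)] sgT[OF pts(3)] sgT[OF pts(4)] by simp
qed


lemma case_231:
  assumes "0 \<le> c1" "c1 \<le> c2" "c2 \<le> 1"
  shows "\<not> closed_C1_arc (concat_arc (concat_arc (piece \<gamma> c1 c2 2) (piece \<gamma> c1 c2 3)) (piece \<gamma> c1 c2 1))"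
proof
  assume h: "closed_C1_arc (concat_arc (concat_arc (piece \<gamma> c1 c2 2) (piece \<gamma> c1 c2 3)) (piece \<gamma> c1 c2 1))"
  have pts: "0 \<in> {0..1::real}" "1 \<in> {0..1::real}" "c1 \<in> {0..1}" "c2 \<in> {0..1}" using assms by auto
  have "closed_C1_arc (concat_arc (concat_arc (\<gamma>, tangent01 \<gamma>, c1, c2) (\<gamma>, tangent01 \<gamma>, c2, 1)) (\<gamma>, tangent01 \<gamma>, 0, c1))"
    using h by (simp add: piece_def)
  then have "\<gamma> c1 = \<gamma> c2 + (sgn (tangent01 \<gamma> c2) / sgn (tangent01 \<gamma> c2)) * (\<gamma> 1 - \<gamma> c2) + (sgn (tangent01 \<gamma> c2) / sgn (tangent01 \<gamma> c2) * sgn (tangent01 \<gamma> 1) / sgn (tangent01 \<gamma> 0)) * (\<gamma> c1 - \<gamma> 0)"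
    by (subst (asm) closed_formula) (use assms nzT pts in auto)
  then show False using ends
    unfolding sgT[OF pts(1)] sgT[OF pts(2)] sgT[OF pts(3)] sgT[OF pts(4)] by (simp add: cis1)
qed

lemma case_312:
  assumes "0 \<le> c1" "c1 \<le> c2" "c2 \<le> 1"
  shows "\<not> closed_C1_arc (concat_arc (concat_arc (piece \<gamma> c1 c2 3) (piece \<gamma> c1 c2 1)) (piece \<gamma> c1 c2 2))"
proof
  assume h: "closed_C1_arc (concat_arc (concat_arc (piece \<gamma> c1 c2 3) (piece \<gamma> c1 c2 1)) (piece \<gamma> c1 c2 2))"
  have pts: "0 \<in> {0..1::real}" "1 \<in> {0..1::real}" "c1 \<in> {0..1}" "c2 \<in> {0..1}" using assms by auto
  have "closed_C1_arc (concat_arc (concat_arc (\<gamma>, tangent01 \<gamma>, c2, 1) (\<gamma>, tangent01 \<gamma>, 0, c1)) (\<gamma>, tangent01 \<gamma>, c1, c2))"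
    using h by (simp add: piece_def)
  then have "\<gamma> c2 = \<gamma> 1 + (sgn (tangent01 \<gamma> 1) / sgn (tangent01 \<gamma> 0)) * (\<gamma> c1 - \<gamma> 0) + (sgn (tangent01 \<gamma> 1) / sgn (tangent01 \<gamma> 0) * sgn (tangent01 \<gamma> c1) / sgn (tangent01 \<gamma> c1)) * (\<gamma> c2 - \<gamma> c1)"
    by (subst (asm) closed_formula) (use assms nzT pts in auto)
  then show False using ends
    unfolding sgT[OF pts(1)] sgT[OF pts(2)] sgT[OF pts(3)] sgT[OF pts(4)] by (simp add: cis1)
qed

lemma case_213:
  assumes m_nz: "m \<noteq> 0"
  shows "\<exists>c1 c2. 0 \<le> c1 \<and> c1 \<le> c2 \<and> c2 \<le> 1 \<and> closed_C1_arc (concat_arc (concat_arc (piece \<gamma> c1 c2 2) (piece \<gamma> c1 c2 1)) (piece \<gamma> c1 c2 3))"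
proof (rule ccontr)
  assume na: "\<not> ?thesis"
  define F where "F = (\<lambda>p::real\<times>real. \<gamma> (snd p) + (cis (\<theta> (snd p)) / cis (\<theta> 0)) * (\<gamma> (fst p) - \<gamma> 0) + (cis (\<theta> (snd p)) / cis (\<theta> 0) * cis (\<theta> (fst p)) / cis (\<theta> (snd p))) * (\<gamma> 1 - \<gamma> (snd p)) - \<gamma> (fst p))"
  have nzF: "F p \<noteq> 0" if p: "p \<in> Tri" for p
  proof
    assume F0: "F p = 0"
    obtain c1 c2 where pe: "p = (c1, c2)" by fastforce
    have a: "0 \<le> c1" "c1 \<le> c2" "c2 \<le> 1" using p pe by auto
    have pts: "0 \<in> {0..1::real}" "1 \<in> {0..1::real}" "c1 \<in> {0..1}" "c2 \<in> {0..1}" using a by auto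
    have e1: "\<gamma> c1 = \<gamma> c2 + (sgn (tangent01 \<gamma> c2) / sgn (tangent01 \<gamma> 0)) * (\<gamma> c1 - \<gamma> 0) + (sgn (tangent01 \<gamma> c2) / sgn (tangent01 \<gamma> 0) * sgn (tangent01 \<gamma> c1) / sgn (tangent01 \<gamma> c2)) * (\<gamma> 1 - \<gamma> c2)"
      unfolding sgT[OF pts(1)] sgT[OF pts(2)] sgT[OF pts(3)] sgT[OF pts(4)]
      using F0 by (simp add: F_def pe right_minus_eq)
    have e2: "sgn (tangent01 \<gamma> c1) = (sgn (tangent01 \<gamma> c2) / sgn (tangent01 \<gamma> 0) * sgn (tangent01 \<gamma> c1) / sgn (tangent01 \<gamma> c2)) * sgn (tangent01 \<gamma> 1)"
      unfolding sgT[OF pts(1)] sgT[OF pts(2)] sgT[OF pts(3)] sgT[OF pts(4)]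
      by (simp add: cis1 field_simps)
    have "closed_C1_arc (concat_arc (concat_arc (\<gamma>, tangent01 \<gamma>, c1, c2) (\<gamma>, tangent01 \<gamma>, 0, c1)) (\<gamma>, tangent01 \<gamma>, c2, 1))"
      by (subst closed_formula) (use a nzT pts e1 e2 in auto)
    then show False using na a by (auto simp: piece_def)
  qed
  have contF: "continuous_on Tri F" unfolding F_def by (intro continuous_intros contT) auto
  have D: "\<gamma> 1 - \<gamma> 0 \<noteq> 0" using ends by simp
  have "(\<lambda>t. 0) 1 - (\<lambda>t. 0) 0 + ((\<lambda>t. 0) 1 - (\<lambda>t. 0) 0) = (\<lambda>t. \<theta> t - \<theta> 0) 1 - (\<lambda>t. \<theta> t - \<theta> 0) 0"
  proof (rule triangle_core[where F=F and D="\<gamma> 1 - \<gamma> 0"])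
    show "continuous_on Tri F" by (rule contF)
  qed (use nzF D theta_cont in \<open>auto simp: F_def cis1 cis_divide[symmetric] field_simps intro!: continuous_intros\<close>)
  then have "\<theta> 1 = \<theta> 0" by simp
  then show False using turning m_nz by simp
qed

lemma case_132:
  assumes m_nz: "m \<noteq> 0"
  shows "\<exists>c1 c2. 0 \<le> c1 \<and> c1 \<le> c2 \<and> c2 \<le> 1 \<and> closed_C1_arc (concat_arc (concat_arc (piece \<gamma> c1 c2 1) (piece \<gamma> c1 c2 3)) (piece \<gamma> c1 c2 2))"
proof (rule ccontr)
  assume na: "\<not> ?thesis"
  define F where "F = (\<lambda>p::real\<times>real. \<gamma> (fst p) + (cis (\<theta> (fst p)) / cis (\<theta> (snd p))) * (\<gamma> 1 - \<gamma> (snd p)) + (cis (\<theta> (fst p)) / cis (\<theta> (snd p)) * cis (\<theta> 1) / cis (\<theta> (fst p))) * (\<gamma> (snd p) - \<gamma> (fst p)) - \<gamma> 0)"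
  have nzF: "F p \<noteq> 0" if p: "p \<in> Tri" for p
  proof
    assume F0: "F p = 0"
    obtain c1 c2 where pe: "p = (c1, c2)" by fastforce
    have a: "0 \<le> c1" "c1 \<le> c2" "c2 \<le> 1" using p pe by auto
    have pts: "0 \<in> {0..1::real}" "1 \<in> {0..1::real}" "c1 \<in> {0..1}" "c2 \<in> {0..1}" using a by auto
    have e1: "\<gamma> 0 = \<gamma> c1 + (sgn (tangent01 \<gamma> c1) / sgn (tangent01 \<gamma> c2)) * (\<gamma> 1 - \<gamma> c2) + (sgn (tangent01 \<gamma> c1) / sgn (tangent01 \<gamma> c2) * sgn (tangent01 \<gamma> 1) / sgn (tangent01 \<gamma> c1)) * (\<gamma> c2 - \<gamma> c1)"
      unfolding sgT[OF pts(1)] sgT[OF pts(2)] sgT[OF pts(3)] sgT[OF pts(4)]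
      using F0 by (simp add: F_def pe right_minus_eq)
    have e2: "sgn (tangent01 \<gamma> 0) = (sgn (tangent01 \<gamma> c1) / sgn (tangent01 \<gamma> c2) * sgn (tangent01 \<gamma> 1) / sgn (tangent01 \<gamma> c1)) * sgn (tangent01 \<gamma> c2)"
      unfolding sgT[OF pts(1)] sgT[OF pts(2)] sgT[OF pts(3)] sgT[OF pts(4)]
      by (simp add: cis1 field_simps)
    have "closed_C1_arc (concat_arc (concat_arc (\<gamma>, tangent01 \<gamma>, 0, c1) (\<gamma>, tangent01 \<gamma>, c2, 1)) (\<gamma>, tangent01 \<gamma>, c1, c2))"
      by (subst closed_formula) (use a nzT pts e1 e2 in auto)
    then show False using na a by (auto simp: piece_def)
  qed
  have contF: "continuous_on Tri F" unfolding F_def by (intro continuous_intros contT) auto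
  have D: "\<gamma> 1 - \<gamma> 0 \<noteq> 0" using ends by simp
  have "(\<lambda>t. \<theta> 0 - \<theta> t) 1 - (\<lambda>t. \<theta> 0 - \<theta> t) 0 + ((\<lambda>t. 0) 1 - (\<lambda>t. 0) 0) = (\<lambda>t. 0) 1 - (\<lambda>t. 0) 0"
  proof (rule triangle_core[where F=F and D="\<gamma> 1 - \<gamma> 0"])
    show "continuous_on Tri F" by (rule contF)
  qed (use nzF D theta_cont in \<open>auto simp: F_def cis1 cis_divide[symmetric] field_simps intro!: continuous_intros\<close>)
  then have "\<theta> 1 = \<theta> 0" by simp
  then show False using turning m_nz by simp
qed

lemma case_321:
  assumes m_nz: "m \<noteq> 0"
  shows "\<exists>c1 c2. 0 \<le> c1 \<and> c1 \<le> c2 \<and> c2 \<le> 1 \<and> closed_C1_arc (concat_arc (concat_arc (piece \<gamma> c1 c2 3) (piece \<gamma> c1 c2 2)) (piece \<gamma> c1 c2 1))"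
proof (rule ccontr)
  assume na: "\<not> ?thesis"
  define F where "F = (\<lambda>p::real\<times>real. \<gamma> 1 + (cis (\<theta> 1) / cis (\<theta> (fst p))) * (\<gamma> (snd p) - \<gamma> (fst p)) + (cis (\<theta> 1) / cis (\<theta> (fst p)) * cis (\<theta> (snd p)) / cis (\<theta> 0)) * (\<gamma> (fst p) - \<gamma> 0) - \<gamma> (snd p))"
  have nzF: "F p \<noteq> 0" if p: "p \<in> Tri" for p
  proof
    assume F0: "F p = 0"
    obtain c1 c2 where pe: "p = (c1, c2)" by fastforce
    have a: "0 \<le> c1" "c1 \<le> c2" "c2 \<le> 1" using p pe by auto
    have pts: "0 \<in> {0..1::real}" "1 \<in> {0..1::real}" "c1 \<in> {0..1}" "c2 \<in> {0..1}" using a by auto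
    have e1: "\<gamma> c2 = \<gamma> 1 + (sgn (tangent01 \<gamma> 1) / sgn (tangent01 \<gamma> c1)) * (\<gamma> c2 - \<gamma> c1) + (sgn (tangent01 \<gamma> 1) / sgn (tangent01 \<gamma> c1) * sgn (tangent01 \<gamma> c2) / sgn (tangent01 \<gamma> 0)) * (\<gamma> c1 - \<gamma> 0)"
      unfolding sgT[OF pts(1)] sgT[OF pts(2)] sgT[OF pts(3)] sgT[OF pts(4)]
      using F0 by (simp add: F_def pe right_minus_eq)
    have e2: "sgn (tangent01 \<gamma> c2) = (sgn (tangent01 \<gamma> 1) / sgn (tangent01 \<gamma> c1) * sgn (tangent01 \<gamma> c2) / sgn (tangent01 \<gamma> 0)) * sgn (tangent01 \<gamma> c1)"
      unfolding sgT[OF pts(1)] sgT[OF pts(2)] sgT[OF pts(3)] sgT[OF pts(4)]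
      by (simp add: cis1 field_simps)
    have "closed_C1_arc (concat_arc (concat_arc (\<gamma>, tangent01 \<gamma>, c2, 1) (\<gamma>, tangent01 \<gamma>, c1, c2)) (\<gamma>, tangent01 \<gamma>, 0, c1))"
      by (subst closed_formula) (use a nzT pts e1 e2 in auto)
    then show False using na a by (auto simp: piece_def)
  qed
  have contF: "continuous_on Tri F" unfolding F_def by (intro continuous_intros contT) auto
  have D: "\<gamma> 1 - \<gamma> 0 \<noteq> 0" using ends by simp
  have "(\<lambda>t. 0) 1 - (\<lambda>t. 0) 0 + ((\<lambda>t. \<theta> 0 - \<theta> t) 1 - (\<lambda>t. \<theta> 0 - \<theta> t) 0) = (\<lambda>t. 0) 1 - (\<lambda>t. 0) 0"
  proof (rule triangle_core[where F=F and D="\<gamma> 1 - \<gamma> 0"])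
    show "continuous_on Tri F" by (rule contF)
  qed (use nzF D theta_cont in \<open>auto simp: F_def cis1 cis_divide[symmetric] field_simps intro!: continuous_intros\<close>)
  then have "\<theta> 1 = \<theta> 0" by simp
  then show False using turning m_nz by simp
qed

end


lemma perm3_cases:
  assumes "\<sigma> permutes {1,2,3::nat}"
  shows "(\<sigma> 1 = 1 \<and> \<sigma> 2 = 2 \<and> \<sigma> 3 = 3) \<or> (\<sigma> 1 = 2 \<and> \<sigma> 2 = 3 \<and> \<sigma> 3 = 1) \<or>
         (\<sigma> 1 = 3 \<and> \<sigma> 2 = 1 \<and> \<sigma> 3 = 2) \<or> (\<sigma> 1 = 2 \<and> \<sigma> 2 = 1 \<and> \<sigma> 3 = 3) \<or>
         (\<sigma> 1 = 1 \<and> \<sigma> 2 = 3 \<and> \<sigma> 3 = 2) \<or> (\<sigma> 1 = 3 \<and> \<sigma> 2 = 2 \<and> \<sigma> 3 = 1)"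
proof -
  have im: "\<sigma> 1 \<in> {1,2,3}" "\<sigma> 2 \<in> {1,2,3}" "\<sigma> 3 \<in> {1,2,3}"
    using permutes_in_image[OF assms] by auto
  have "inj \<sigma>" using permutes_inj[OF assms] .
  then have "\<sigma> 1 \<noteq> \<sigma> 2" "\<sigma> 1 \<noteq> \<sigma> 3" "\<sigma> 2 \<noteq> \<sigma> 3" by (auto dest: injD)
  moreover have "\<sigma> 1 = 1 \<or> \<sigma> 1 = 2 \<or> \<sigma> 1 = 3" "\<sigma> 2 = 1 \<or> \<sigma> 2 = 2 \<or> \<sigma> 2 = 3"
    "\<sigma> 3 = 1 \<or> \<sigma> 3 = 2 \<or> \<sigma> 3 = 3" using im by simp_all
  ultimately show ?thesis by (elim disjE; simp)
qed

lemma transp_ext: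
  assumes "\<sigma> permutes {1,2,3::nat}" "a \<in> {1,2,3}" "b \<in> {1,2,3}" "a \<noteq> b"
    "\<forall>x\<in>{1,2,3}. \<sigma> x = Transposition.transpose a b x"
  shows "is_transposition3 \<sigma>"
proof -
  have "\<sigma> = Transposition.transpose a b"
  proof
    fix x show "\<sigma> x = Transposition.transpose a b x"
    proof (cases "x \<in> {1,2,3}")
      case True then show ?thesis using assms(5) by blast
    next
      case False
      then show ?thesis using permutes_not_in[OF assms(1) False] assms(2,3)
        by (auto simp: transpose_def)
    qed
  qed
  then show ?thesis unfolding is_transposition3_def
    by (intro exI[of _ a] exI[of _ b] conjI assms(2-4))
qed

theorem proposition4p4:
  fixes \<gamma> :: "real \<Rightarrow> complex" and \<gamma>' :: "real \<Rightarrow> complex"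
    and \<theta> :: "real \<Rightarrow> real" and c :: real and m :: int
    and \<sigma> :: "nat \<Rightarrow> nat"
  assumes deriv: "\<And>s. s \<in> {0..1} \<Longrightarrow> (\<gamma> has_vector_derivative \<gamma>' s) (at s within {0..1})"
    and C1: "continuous_on {0..1} \<gamma>'"
    and c_pos: "c > 0"
    and speed: "\<And>s. s \<in> {0..1} \<Longrightarrow> norm (\<gamma>' s) = c"
    and ends: "\<gamma> 0 \<noteq> \<gamma> 1"
    and theta_cont: "continuous_on {0..1} \<theta>"
    and theta: "\<And>s. s \<in> {0..1} \<Longrightarrow> \<gamma>' s = complex_of_real c * cis (\<theta> s)"
    and turning: "\<theta> 1 - \<theta> 0 = 2 * pi * real_of_int m"
    and m_nz: "m \<noteq> 0"
    and perm: "\<sigma> permutes {1,2,3}"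
  shows "rearrangeable_3_1 \<gamma> \<sigma> \<longleftrightarrow> is_transposition3 \<sigma>"
proof -
  note H = deriv c_pos ends theta_cont theta turning
  have R: "rearrangeable_3_1 \<gamma> \<sigma> \<longleftrightarrow> (\<exists>c1 c2. 0 \<le> c1 \<and> c1 \<le> c2 \<and> c2 \<le> 1 \<and>
      closed_C1_arc (concat_arc (concat_arc (piece \<gamma> c1 c2 (\<sigma> 1)) (piece \<gamma> c1 c2 (\<sigma> 2))) (piece \<gamma> c1 c2 (\<sigma> 3))))"
    by (simp add: rearrangeable_3_1_def rearr_def)
  from perm3_cases[OF perm] show ?thesis
  proof (elim disjE conjE)
    assume s: "\<sigma> 1 = 1" "\<sigma> 2 = 2" "\<sigma> 3 = 3"
    have "\<not> rearrangeable_3_1 \<gamma> \<sigma>" unfolding R s using case_123[OF H] by blast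
    moreover have "\<not> is_transposition3 \<sigma>"
    proof
      assume "is_transposition3 \<sigma>"
      then obtain a b where ab: "a \<in> {1,2,3}" "b \<in> {1,2,3}" "a \<noteq> b" "\<sigma> = Transposition.transpose a b"
        unfolding is_transposition3_def by blast
      have "\<sigma> a = a" using ab(1) s by auto
      moreover have "\<sigma> a = b" using ab(4) by simp
      ultimately show False using ab(3) by simp
    qed
    ultimately show ?thesis by blast
  next
    assume s: "\<sigma> 1 = 2" "\<sigma> 2 = 3" "\<sigma> 3 = 1"
    have "\<not> rearrangeable_3_1 \<gamma> \<sigma>" unfolding R s using case_231[OF H] by blast
    moreover have "\<not> is_transposition3 \<sigma>"
    proof
      assume "is_transposition3 \<sigma>"
      then obtain a b where ab: "a \<in> {1,2,3}" "b \<in> {1,2,3}" "a \<noteq> b" "\<sigma> = Transposition.transpose a b"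
        unfolding is_transposition3_def by blast
      have "\<sigma> (\<sigma> a) = a" using ab(4) by simp
      moreover have "\<sigma> (\<sigma> a) \<noteq> a" using ab(1) s by auto
      ultimately show False by simp
    qed
    ultimately show ?thesis by blast
  next
    assume s: "\<sigma> 1 = 3" "\<sigma> 2 = 1" "\<sigma> 3 = 2"
    have "\<not> rearrangeable_3_1 \<gamma> \<sigma>" unfolding R s using case_312[OF H] by blast
    moreover have "\<not> is_transposition3 \<sigma>"
    proof
      assume "is_transposition3 \<sigma>"
      then obtain a b where ab: "a \<in> {1,2,3}" "b \<in> {1,2,3}" "a \<noteq> b" "\<sigma> = Transposition.transpose a b"
        unfolding is_transposition3_def by blast
      have "\<sigma> (\<sigma> a) = a" using ab(4) by simp
      moreover have "\<sigma> (\<sigma> a) \<noteq> a" using ab(1) s by auto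
      ultimately show False by simp
    qed
    ultimately show ?thesis by blast
  next
    assume s: "\<sigma> 1 = 2" "\<sigma> 2 = 1" "\<sigma> 3 = 3"
    have "rearrangeable_3_1 \<gamma> \<sigma>" unfolding R s using case_213[OF H m_nz] by blast
    moreover have "is_transposition3 \<sigma>"
    proof (rule transp_ext[OF perm, of 1 2])
      have f: "\<sigma> 1 = Transposition.transpose 1 2 1" "\<sigma> 2 = Transposition.transpose 1 2 2"
        "\<sigma> 3 = Transposition.transpose 1 2 3"
        unfolding s by (simp_all add: transpose_def)
      show "\<forall>x\<in>{1,2,3}. \<sigma> x = Transposition.transpose 1 2 x" using f by (metis empty_iff insert_iff)
    qed auto
    ultimately show ?thesis by blast
  next
    assume s: "\<sigma> 1 = 1" "\<sigma> 2 = 3" "\<sigma> 3 = 2"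
    have "rearrangeable_3_1 \<gamma> \<sigma>" unfolding R s using case_132[OF H m_nz] by blast
    moreover have "is_transposition3 \<sigma>"
    proof (rule transp_ext[OF perm, of 2 3])
      have f: "\<sigma> 1 = Transposition.transpose 2 3 1" "\<sigma> 2 = Transposition.transpose 2 3 2"
        "\<sigma> 3 = Transposition.transpose 2 3 3"
        unfolding s by (simp_all add: transpose_def)
      show "\<forall>x\<in>{1,2,3}. \<sigma> x = Transposition.transpose 2 3 x" using f by (metis empty_iff insert_iff)
    qed auto
    ultimately show ?thesis by blast
  next
    assume s: "\<sigma> 1 = 3" "\<sigma> 2 = 2" "\<sigma> 3 = 1"
    have "rearrangeable_3_1 \<gamma> \<sigma>" unfolding R s using case_321[OF H m_nz] by blast
    moreover have "is_transposition3 \<sigma>"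
    proof (rule transp_ext[OF perm, of 1 3])
      have f: "\<sigma> 1 = Transposition.transpose 1 3 1" "\<sigma> 2 = Transposition.transpose 1 3 2"
        "\<sigma> 3 = Transposition.transpose 1 3 3"
        unfolding s by (simp_all add: transpose_def)
      show "\<forall>x\<in>{1,2,3}. \<sigma> x = Transposition.transpose 1 3 x" using f by (metis empty_iff insert_iff)
    qed auto
    ultimately show ?thesis by blast
  qed
qed

end
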